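(* Let $\pi\in[n]^m$ be any picking sequence over a set of $m$ chores, and let agent $i$ have an additive disvaluation $c_i$; order the chores so that $c_i(e_1)\ge c_i(e_2)\ge\cdots\ge c_i(e_m)$ and let $R_i=\{r:\pi_r=i\}$. If agent $i$ follows the greedy picking strategy, then for all disvaluation functions and strategies of the other agents, the bundle she receives has disvalue at most $\sum_{r\in R_i}c_i(e_{m-r+1})$; and this worst case is attained when the instance is identically ordered (every agent's disvaluation is non-increasing along $e_1,\ldots,e_m$) and all other agents also follow the greedy picking strategy.
   Context: Picking sequence: in round $r$ agent $\pi_r$ takes one chore among those not taken earlier. Greedy picking strategy: in each own round take a remaining chore of smallest own disvalue. Disvaluations are additive and nonnegative. *)

theory Defs
  imports Complex_Main
begin

text \<open>Chores form a finite set E with card E = m; rounds are 1..m.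
  A run of the picking sequence is recorded by sigma, where sigma r is the chore
  taken in round r; a run takes every chore exactly once.\<close>

definition picking_run :: "'b set \<Rightarrow> nat \<Rightarrow> (nat \<Rightarrow> 'b) \<Rightarrow> bool" where
  "picking_run E m \<sigma> \<longleftrightarrow> bij_betw \<sigma> {1..m} E"

definition remaining :: "'b set \<Rightarrow> (nat \<Rightarrow> 'b) \<Rightarrow> nat \<Rightarrow> 'b set" where
  "remaining E \<sigma> r = E - \<sigma> ` {1..<r}"

definition greedy_pick :: "('a \<Rightarrow> 'b \<Rightarrow> real) \<Rightarrow> 'a \<Rightarrow> 'b set \<Rightarrow> (nat \<Rightarrow> 'b) \<Rightarrow> nat \<Rightarrow> bool" where
  "greedy_pick c j E \<sigma> r \<longleftrightarrow> (\<forall>x \<in> remaining E \<sigma> r. c j (\<sigma> r) \<le> c j x)"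

definition rounds_of :: "(nat \<Rightarrow> 'a) \<Rightarrow> nat \<Rightarrow> 'a \<Rightarrow> nat set" where
  "rounds_of \<pi> m i = {r \<in> {1..m}. \<pi> r = i}"

definition bundle_of :: "(nat \<Rightarrow> 'a) \<Rightarrow> (nat \<Rightarrow> 'b) \<Rightarrow> nat \<Rightarrow> 'a \<Rightarrow> 'b set" where
  "bundle_of \<pi> \<sigma> m i = \<sigma> ` rounds_of \<pi> m i"

end

theory Submission
  imports Defs
begin

lemma part1:
  fixes \<pi> :: "nat \<Rightarrow> 'a" and c :: "'a \<Rightarrow> 'b \<Rightarrow> real" and E :: "'b set"
    and m :: nat and i :: 'a and e :: "nat \<Rightarrow> 'b"
  assumes fin: "finite E" and cE: "card E = m"
    and e_bij: "bij_betw e {1..m} E"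
    and e_sorted: "\<forall>k l. 1 \<le> k \<longrightarrow> k \<le> l \<longrightarrow> l \<le> m \<longrightarrow> c i (e l) \<le> c i (e k)"
    and run: "picking_run E m \<sigma>"
    and gr: "\<forall>r \<in> rounds_of \<pi> m i. greedy_pick c i E \<sigma> r"
  shows "(\<Sum>x \<in> bundle_of \<pi> \<sigma> m i. c i x) \<le> (\<Sum>r \<in> rounds_of \<pi> m i. c i (e (m - r + 1)))"
proof -
  have sb: "bij_betw \<sigma> {1..m} E" using run unfolding picking_run_def .
  have R: "rounds_of \<pi> m i \<subseteq> {1..m}" unfolding rounds_of_def by auto
  have inj: "inj_on \<sigma> (rounds_of \<pi> m i)"
    using sb R bij_betw_imp_inj_on inj_on_subset by blast
  have "(\<Sum>x \<in> bundle_of \<pi> \<sigma> m i. c i x) = (\<Sum>r \<in> rounds_of \<pi> m i. c i (\<sigma> r))"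
    unfolding bundle_of_def using sum.reindex[OF inj] by simp
  also have "\<dots> \<le> (\<Sum>r \<in> rounds_of \<pi> m i. c i (e (m - r + 1)))"
  proof (rule sum_mono)
    fix r assume rR: "r \<in> rounds_of \<pi> m i"
    then have r1: "1 \<le> r" "r \<le> m" using R by auto
    have sub: "\<sigma> ` {1..<r} \<subseteq> E" using sb r1 bij_betw_imp_surj_on by fastforce
    have injs: "inj_on \<sigma> {1..<r}"
      using sb r1 bij_betw_imp_inj_on inj_on_subset[of \<sigma> "{1..m}" "{1..<r}"] by fastforce
    have cs: "card (\<sigma> ` {1..<r}) = r - 1" using card_image[OF injs] by simp
    have crem: "card (remaining E \<sigma> r) = m - r + 1"
      unfolding remaining_def using card_Diff_subset[OF _ sub] fin cs cE r1
      by (simp add: finite_subset)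
    have ce: "card (e ` {1..m-r}) \<le> m - r"
      using card_image_le[of "{1..m-r}" e] by simp
    have "\<not> remaining E \<sigma> r \<subseteq> e ` {1..m-r}"
    proof
      assume "remaining E \<sigma> r \<subseteq> e ` {1..m-r}"
      then have "card (remaining E \<sigma> r) \<le> card (e ` {1..m-r})"
        by (intro card_mono) auto
      then show False using crem ce by simp
    qed
    then obtain x where xr: "x \<in> remaining E \<sigma> r" and xn: "x \<notin> e ` {1..m-r}" by blast
    have "x \<in> E" using xr unfolding remaining_def by auto
    then obtain k where k: "k \<in> {1..m}" "x = e k"
      using e_bij bij_betw_imp_surj_on by (metis imageE)
    have "k > m - r" using xn k by (metis atLeastAtMost_iff image_eqI not_less)
    then have "c i x \<le> c i (e (m - r + 1))" using e_sorted k r1 by auto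
    moreover have "c i (\<sigma> r) \<le> c i x" using gr rR xr unfolding greedy_pick_def by blast
    ultimately show "c i (\<sigma> r) \<le> c i (e (m - r + 1))" by linarith
  qed
  finally show ?thesis .
qed

lemma flip_bij: "bij_betw (\<lambda>r. m - r + 1) {1..m} {1..(m::nat)}"
  by (rule bij_betw_byWitness[where f' = "\<lambda>r. m - r + 1"]) auto

theorem lemma1:
  fixes \<pi> :: "nat \<Rightarrow> 'a" and c :: "'a \<Rightarrow> 'b \<Rightarrow> real" and E :: "'b set"
    and m :: nat and i :: 'a and e :: "nat \<Rightarrow> 'b"
  assumes "finite E" and "card E = m"
    and nonneg: "\<forall>j. \<forall>x\<in>E. 0 \<le> c j x"
    and e_bij: "bij_betw e {1..m} E"
    and e_sorted: "\<forall>k l. 1 \<le> k \<longrightarrow> k \<le> l \<longrightarrow> l \<le> m \<longrightarrow> c i (e l) \<le> c i (e k)"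
  shows "(\<forall>\<sigma>. picking_run E m \<sigma> \<and> (\<forall>r \<in> rounds_of \<pi> m i. greedy_pick c i E \<sigma> r) \<longrightarrow>
            (\<Sum>x \<in> bundle_of \<pi> \<sigma> m i. c i x) \<le> (\<Sum>r \<in> rounds_of \<pi> m i. c i (e (m - r + 1))))
       \<and> ((\<forall>j k l. 1 \<le> k \<longrightarrow> k \<le> l \<longrightarrow> l \<le> m \<longrightarrow> c j (e l) \<le> c j (e k)) \<longrightarrow>
            (\<exists>\<sigma>. picking_run E m \<sigma> \<and> (\<forall>r \<in> {1..m}. greedy_pick c (\<pi> r) E \<sigma> r) \<and>
                 (\<Sum>x \<in> bundle_of \<pi> \<sigma> m i. c i x) = (\<Sum>r \<in> rounds_of \<pi> m i. c i (e (m - r + 1)))))"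
proof (intro conjI allI impI)
  fix \<sigma> assume "picking_run E m \<sigma> \<and> (\<forall>r \<in> rounds_of \<pi> m i. greedy_pick c i E \<sigma> r)"
  then show "(\<Sum>x \<in> bundle_of \<pi> \<sigma> m i. c i x) \<le> (\<Sum>r \<in> rounds_of \<pi> m i. c i (e (m - r + 1)))"
    using part1[of E m e c i \<sigma> \<pi>] assms by blast
next
  assume io: "\<forall>j k l. 1 \<le> k \<longrightarrow> k \<le> l \<longrightarrow> l \<le> m \<longrightarrow> c j (e l) \<le> c j (e k)"
  define \<sigma> where "\<sigma> = (\<lambda>r. e (m - r + 1))"
  have sb: "bij_betw \<sigma> {1..m} E"
    unfolding \<sigma>_def using bij_betw_trans[OF flip_bij e_bij] by (simp add: comp_def)
  have R: "rounds_of \<pi> m i \<subseteq> {1..m}" unfolding rounds_of_def by auto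
  have inj: "inj_on \<sigma> (rounds_of \<pi> m i)"
    using sb R bij_betw_imp_inj_on inj_on_subset by blast
  have gr: "\<forall>r \<in> {1..m}. greedy_pick c (\<pi> r) E \<sigma> r"
  proof
    fix r assume r: "r \<in> {1..m}"
    show "greedy_pick c (\<pi> r) E \<sigma> r" unfolding greedy_pick_def
    proof
      fix x assume xr: "x \<in> remaining E \<sigma> r"
      then have "x \<in> E" unfolding remaining_def by auto
      then obtain k where k: "k \<in> {1..m}" "x = e k"
        using e_bij bij_betw_imp_surj_on by (metis imageE)
      have "k \<le> m - r + 1"
      proof (rule ccontr)
        assume "\<not> k \<le> m - r + 1"
        then have "m - k + 1 \<in> {1..<r}" "\<sigma> (m - k + 1) = x" using k r
          by (auto simp: \<sigma>_def)
        then show False using xr unfolding remaining_def by blast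
      qed
      then show "c (\<pi> r) (\<sigma> r) \<le> c (\<pi> r) x" using io k r unfolding \<sigma>_def by auto
    qed
  qed
  have "(\<Sum>x \<in> bundle_of \<pi> \<sigma> m i. c i x) = (\<Sum>r \<in> rounds_of \<pi> m i. c i (\<sigma> r))"
    unfolding bundle_of_def using sum.reindex[OF inj] by simp
  then show "\<exists>\<sigma>. picking_run E m \<sigma> \<and> (\<forall>r \<in> {1..m}. greedy_pick c (\<pi> r) E \<sigma> r) \<and>
                 (\<Sum>x \<in> bundle_of \<pi> \<sigma> m i. c i x) = (\<Sum>r \<in> rounds_of \<pi> m i. c i (e (m - r + 1)))"
    using sb gr unfolding picking_run_def \<sigma>_def by blast
qed

end
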